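(* Let $\mu$ be an Ising model on $\{-1,1\}^p$ with $\ell_1$-width at most $\gamma>0$, fix $u\in[p]$, and define $\mathcal R^*(\theta)=\mathbb E_\mu\exp\big(-\theta\sigma_u-\sigma_u\sum_{j\ne u}\theta^*_{u,j}\sigma_j\big)$ for $\theta\in\mathbb R$. Then for every $\theta\in[-\gamma,\gamma]$, \[ \mathcal R^*(\theta)-\mathcal R^*(\theta^*_u)-(\mathcal R^* )'(\theta^*_u)(\theta-\theta^*_u)\ \ge\ \frac{e^{-\gamma}}{2+2\gamma}(\theta-\theta^*_u)^2 . \]
   Context: Ising model: $\mu(\underline\sigma)\propto\exp\big(\sum_{\{u,v\}}\theta^*_{u,v}\sigma_u\sigma_v+\sum_u\theta^*_u\sigma_u\big)$ on $\{-1,1\}^p$, first sum over unordered pairs of distinct indices, symmetric couplings; $\ell_1$-width at most $\gamma$ means $\sum_{v\ne u}|\theta^*_{u,v}|+|\theta^*_u|\le\gamma$ for all $u$. *)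

theory Defs
  imports "HOL-Analysis.Analysis" "HOL-Library.FuncSet"
begin

text \<open>Spin configurations on [p] = {0..<p}: functions {..<p} -> {-1,1}
  (extensional, undefined outside [p]).\<close>
definition ising_configs :: "nat \<Rightarrow> (nat \<Rightarrow> real) set" where
  "ising_configs p = PiE {..<p} (\<lambda>_. {-1, 1})"

definition ising_energy :: "nat \<Rightarrow> (nat \<Rightarrow> nat \<Rightarrow> real) \<Rightarrow> (nat \<Rightarrow> real) \<Rightarrow> (nat \<Rightarrow> real) \<Rightarrow> real" where
  "ising_energy p J h s =
     (\<Sum>(i,j)\<in>{(i,j). i < j \<and> j < p}. J i j * s i * s j) + (\<Sum>i<p. h i * s i)"

definition ising_Z :: "nat \<Rightarrow> (nat \<Rightarrow> nat \<Rightarrow> real) \<Rightarrow> (nat \<Rightarrow> real) \<Rightarrow> real" where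
  "ising_Z p J h = (\<Sum>s\<in>ising_configs p. exp (ising_energy p J h s))"

definition ising_prob :: "nat \<Rightarrow> (nat \<Rightarrow> nat \<Rightarrow> real) \<Rightarrow> (nat \<Rightarrow> real) \<Rightarrow> (nat \<Rightarrow> real) \<Rightarrow> real" where
  "ising_prob p J h s = exp (ising_energy p J h s) / ising_Z p J h"

definition ising_expect :: "nat \<Rightarrow> (nat \<Rightarrow> nat \<Rightarrow> real) \<Rightarrow> (nat \<Rightarrow> real) \<Rightarrow> ((nat \<Rightarrow> real) \<Rightarrow> real) \<Rightarrow> real" where
  "ising_expect p J h f = (\<Sum>s\<in>ising_configs p. ising_prob p J h s * f s)"

definition symmetric_couplings :: "nat \<Rightarrow> (nat \<Rightarrow> nat \<Rightarrow> real) \<Rightarrow> bool" where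
  "symmetric_couplings p J = (\<forall>i<p. \<forall>j<p. J i j = J j i)"

definition l1_width_le :: "nat \<Rightarrow> (nat \<Rightarrow> nat \<Rightarrow> real) \<Rightarrow> (nat \<Rightarrow> real) \<Rightarrow> real \<Rightarrow> bool" where
  "l1_width_le p J h \<gamma> = (\<forall>u<p. (\<Sum>v\<in>{..<p} - {u}. \<bar>J u v\<bar>) + \<bar>h u\<bar> \<le> \<gamma>)"

definition ising_Rstar :: "nat \<Rightarrow> (nat \<Rightarrow> nat \<Rightarrow> real) \<Rightarrow> (nat \<Rightarrow> real) \<Rightarrow> nat \<Rightarrow> real \<Rightarrow> real" where
  "ising_Rstar p J h u \<theta> =
     ising_expect p J h (\<lambda>s. exp (- \<theta> * s u - s u * (\<Sum>j\<in>{..<p} - {u}. J u j * s j)))"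

end

theory Submission imports Defs begin

lemma cosh_ge: "cosh (x::real) \<ge> 1 + x^2/2"
proof -
  have s: "summable (\<lambda>n. if even n then x ^ n /\<^sub>R fact n else 0)"
    using cosh_converges sums_summable by blast
  have "(\<Sum>n\<in>{..<3}. (if even n then x ^ n /\<^sub>R fact n else 0)) \<le> suminf (\<lambda>n. if even n then x ^ n /\<^sub>R fact n else 0)"
    by (rule sum_le_suminf[OF s]) (auto simp: zero_le_even_power)
  also have "\<dots> = cosh x" using cosh_converges sums_unique by metis
  finally show ?thesis by (simp add: eval_nat_numeral)
qed

lemma pairs_sum:
  "(\<Sum>(i,j)\<in>{(i,j). i < j \<and> j < (p::nat)}. f i j) = (\<Sum>j<p. \<Sum>i<j. f i j)"
proof -
  have "{(i,j). i < j \<and> j < p} = (\<lambda>(j,i). (i,j)) ` (SIGMA j:{..<p}. {..<j})" by auto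
  moreover have "inj_on (\<lambda>(j,i). (i,j)) (SIGMA j:{..<p}. {..<j})" by (auto simp: inj_on_def)
  ultimately have "(\<Sum>(i,j)\<in>{(i,j). i < j \<and> j < p}. f i j) = (\<Sum>(j,i)\<in>(SIGMA j:{..<p}. {..<j}). f i j)"
    by (simp add: sum.reindex case_prod_unfold)
  also have "\<dots> = (\<Sum>j<p. \<Sum>i<j. f i j)" by (simp add: sum.Sigma)
  finally show ?thesis .
qed

lemma split_sum:
  assumes "u < (p::nat)"
  shows "(\<Sum>j\<in>{..<p}-{u}. f j) = (\<Sum>j<p. if u < j then f j else (0::real)) + (\<Sum>i<u. f i)"
proof -
  have "(\<Sum>j\<in>{..<p}-{u}. f j) = (\<Sum>j\<in>{u<..<p}. f j) + (\<Sum>i\<in>{..<u}. f i)"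
  proof -
    have U: "{..<p}-{u} = {u<..<p} \<union> {..<u}" using assms by auto
    show ?thesis unfolding U by (rule sum.union_disjoint) auto
  qed
  moreover have "(\<Sum>j<p. if u < j then f j else (0::real)) = (\<Sum>j\<in>{u<..<p}. f j)"
    by (rule sum.mono_neutral_cong_right) auto
  ultimately show ?thesis by simp
qed

lemma energy_diff:
  assumes sym: "symmetric_couplings p J" and up: "u < p"
    and ts: "\<And>j. j \<noteq> u \<Longrightarrow> t j = s j"
  shows "ising_energy p J h t - ising_energy p J h s
     = (t u - s u) * (h u + (\<Sum>j\<in>{..<p}-{u}. J u j * s j))"
proof -
  define d where "d = t u - s u"
  have tm: "J i j * t i * t j - J i j * s i * s j =
      (if i = u then J u j * d * s j else 0) + (if j = u then J i u * s i * d else 0)"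
    if "i < j" for i j
    using that ts by (cases "i = u"; cases "j = u") (auto simp: d_def algebra_simps)
  have "(\<Sum>(i,j)\<in>{(i,j). i < j \<and> j < p}. J i j * t i * t j) - (\<Sum>(i,j)\<in>{(i,j). i < j \<and> j < p}. J i j * s i * s j)
      = (\<Sum>j<p. \<Sum>i<j. J i j * t i * t j - J i j * s i * s j)"
    by (simp add: pairs_sum sum_subtractf)
  also have "\<dots> = (\<Sum>j<p. \<Sum>i<j. (if i = u then J u j * d * s j else 0) + (if j = u then J i u * s i * d else 0))"
    using tm by simp
  also have "\<dots> = (\<Sum>j<p. (\<Sum>i<j. (if i = u then J u j * d * s j else 0)) + (\<Sum>i<j. (if j = u then J i u * s i * d else 0)))"
    by (simp add: sum.distrib)
  also have "\<dots> = (\<Sum>j<p. (if u < j then J u j * d * s j else 0) + (if j = u then (\<Sum>i<u. J i u * s i * d) else 0))"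
    by (rule sum.cong) (auto simp: sum.delta)
  also have "\<dots> = (\<Sum>j<p. (if u < j then J u j * d * s j else 0)) + (\<Sum>i<u. J i u * s i * d)"
    using up by (simp add: sum.distrib sum.delta)
  also have "\<dots> = (\<Sum>j<p. (if u < j then J u j * d * s j else 0)) + (\<Sum>i<u. J u i * d * s i)"
    using sym up unfolding symmetric_couplings_def by (auto intro!: sum.cong)
  also have "\<dots> = (\<Sum>j\<in>{..<p}-{u}. J u j * d * s j)"
    using split_sum[OF up, of "\<lambda>j. J u j * d * s j"] by simp
  also have "\<dots> = d * (\<Sum>j\<in>{..<p}-{u}. J u j * s j)"
    by (simp add: sum_distrib_left algebra_simps)
  finally have P: "(\<Sum>(i,j)\<in>{(i,j). i < j \<and> j < p}. J i j * t i * t j) - (\<Sum>(i,j)\<in>{(i,j). i < j \<and> j < p}. J i j * s i * s j) = d * (\<Sum>j\<in>{..<p}-{u}. J u j * s j)" .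
  have "(\<Sum>i<p. h i * t i) - (\<Sum>i<p. h i * s i) = (\<Sum>i<p. if i = u then h u * d else 0)"
    unfolding sum_subtractf[symmetric] using ts by (intro sum.cong) (auto simp: d_def algebra_simps)
  also have "\<dots> = h u * d" using up by simp
  finally have H: "(\<Sum>i<p. h i * t i) - (\<Sum>i<p. h i * s i) = h u * d" .
  show ?thesis unfolding ising_energy_def using P H by (simp add: d_def algebra_simps)
qed

theorem mainTheorem9:
  fixes p :: nat and J :: "nat \<Rightarrow> nat \<Rightarrow> real" and h :: "nat \<Rightarrow> real"
    and \<gamma> \<theta> :: real and u :: nat
  assumes "symmetric_couplings p J"
    and "\<gamma> > 0"
    and "l1_width_le p J h \<gamma>"
    and "u < p"
    and "\<theta> \<in> {-\<gamma>..\<gamma>}"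
  shows "ising_Rstar p J h u \<theta> - ising_Rstar p J h u (h u)
           - deriv (ising_Rstar p J h u) (h u) * (\<theta> - h u)
         \<ge> exp (- \<gamma>) / (2 + 2 * \<gamma>) * (\<theta> - h u)^2"
proof -
  note sym = assms(1) and gpos = assms(2) and wid = assms(3) and up = assms(4)
  define C where "C = ising_configs p"
  define F where "F = (\<lambda>s::nat\<Rightarrow>real. s(u := - s u))"
  define m where "m = (\<lambda>s::nat\<Rightarrow>real. \<Sum>j\<in>{..<p}-{u}. J u j * s j)"
  define Z where "Z = ising_Z p J h"
  define g where "g = (\<lambda>s. ising_prob p J h s * exp (- s u * (h u + m s)))"
  define G where "G = sum g C"
  have finC: "finite C" unfolding C_def ising_configs_def by (auto intro!: finite_PiE)
  have su: "s j \<in> {-1, 1}" if "s \<in> C" "j < p" for s j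
    using that unfolding C_def ising_configs_def by (auto simp: PiE_iff)
  have FC: "F s \<in> C" if "s \<in> C" for s
    using that up unfolding C_def ising_configs_def F_def by (auto simp: PiE_iff extensional_def)
  have FF: "F (F s) = s" for s unfolding F_def by auto
  have bijF: "bij_betw F C C"
    by (rule bij_betwI[where g = F]) (auto simp: FC FF)
  have mF: "m (F s) = m s" for s unfolding m_def F_def by (intro sum.cong) auto
  have Cne: "C \<noteq> {}"
    unfolding C_def ising_configs_def by (simp add: PiE_eq_empty_iff)
  have Zpos: "Z > 0" unfolding Z_def ising_Z_def C_def[symmetric]
    using finC Cne by (intro sum_pos) auto
  have gF: "g (F s) = g s" if "s \<in> C" for s
  proof -
    have E: "ising_energy p J h (F s) - ising_energy p J h s = (F s u - s u) * (h u + m s)"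
      unfolding m_def by (rule energy_diff[OF sym up]) (simp add: F_def)
    have Fu: "F s u = - s u" unfolding F_def by simp
    have "ising_energy p J h (F s) = ising_energy p J h s - 2 * s u * (h u + m s)"
      using E Fu by (simp add: algebra_simps)
    then have "exp (ising_energy p J h (F s)) * exp (- (- s u) * (h u + m s)) = exp (ising_energy p J h s) * exp (- s u * (h u + m s))"
      unfolding mult_exp_exp by (intro arg_cong[where f=exp]) (simp add: algebra_simps)
    then show ?thesis
      unfolding g_def ising_prob_def mF Fu by simp
  qed
  have Rform: "ising_Rstar p J h u t = (\<Sum>s\<in>C. g s * exp (- (t - h u) * s u))" for t
    unfolding ising_Rstar_def ising_expect_def C_def[symmetric] g_def m_def
  proof (intro sum.cong refl)
    fix s assume "s \<in> C"
    have "exp (- s u * (h u + (\<Sum>j\<in>{..<p} - {u}. J u j * s j))) * exp (- (t - h u) * s u)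
        = exp (- t * s u - s u * (\<Sum>j\<in>{..<p} - {u}. J u j * s j))"
      unfolding mult_exp_exp by (intro arg_cong[where f=exp]) (simp add: algebra_simps)
    then show "ising_prob p J h s * exp (- t * s u - s u * (\<Sum>j\<in>{..<p} - {u}. J u j * s j)) =
      ising_prob p J h s * exp (- s u * (h u + (\<Sum>j\<in>{..<p} - {u}. J u j * s j))) * exp (- (t - h u) * s u)"
      by (simp only: mult.assoc)
  qed
  have sym_sum: "(\<Sum>s\<in>C. g s * exp (- x * s u)) = (\<Sum>s\<in>C. g s * exp (x * s u))" for x
  proof -
    have "(\<Sum>s\<in>C. g s * exp (- x * s u)) = (\<Sum>s\<in>C. g (F s) * exp (- x * F s u))"
      using sum.reindex_bij_betw[OF bijF, of "\<lambda>s. g s * exp (- x * s u)"] by simp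
    also have "\<dots> = (\<Sum>s\<in>C. g s * exp (x * s u))"
      by (intro sum.cong refl) (simp add: gF, simp add: F_def)
    finally show ?thesis .
  qed
  have Rcosh: "ising_Rstar p J h u t = G * cosh (t - h u)" for t
  proof -
    let ?x = "t - h u"
    have "ising_Rstar p J h u t = ((\<Sum>s\<in>C. g s * exp (- ?x * s u)) + (\<Sum>s\<in>C. g s * exp (?x * s u))) / 2"
      using Rform[of t] sym_sum[of ?x] by simp
    also have "\<dots> = (\<Sum>s\<in>C. g s * cosh ?x)"
    proof -
      have "(\<Sum>s\<in>C. g s * exp (- ?x * s u)) + (\<Sum>s\<in>C. g s * exp (?x * s u)) = (\<Sum>s\<in>C. 2 * (g s * cosh ?x))"
        unfolding sum.distrib[symmetric]
      proof (intro sum.cong refl)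
        fix s assume "s \<in> C"
        then have "s u \<in> {-1, 1}" using su up by blast
        then show "g s * exp (- ?x * s u) + g s * exp (?x * s u) = 2 * (g s * cosh ?x)"
          by (auto simp: cosh_field_def algebra_simps)
      qed
      then show ?thesis by (simp add: sum_distrib_left[symmetric])
    qed
    finally show ?thesis by (simp add: G_def sum_distrib_right)
  qed
  have Rfun: "ising_Rstar p J h u = (\<lambda>t. G * cosh (t - h u))" using Rcosh by auto
  have "((\<lambda>t. G * cosh (t - h u)) has_real_derivative G * (sinh (h u - h u) * 1)) (at (h u))"
    by (auto intro!: derivative_eq_intros)
  then have D: "deriv (ising_Rstar p J h u) (h u) = 0"
    unfolding Rfun by (simp add: DERIV_imp_deriv)
  have gl: "g s \<ge> ising_prob p J h s * exp (- \<gamma>)" if "s \<in> C" for s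
  proof -
    have "\<bar>m s\<bar> \<le> (\<Sum>j\<in>{..<p}-{u}. \<bar>J u j * s j\<bar>)" unfolding m_def by (rule sum_abs)
    also have "\<dots> = (\<Sum>j\<in>{..<p}-{u}. \<bar>J u j\<bar>)"
      using su[OF that] by (intro sum.cong refl) (force simp: abs_mult)
    finally have "\<bar>m s\<bar> + \<bar>h u\<bar> \<le> \<gamma>" using wid up unfolding l1_width_le_def by force
    moreover have "s u \<in> {-1, 1}" using su[OF that up] .
    ultimately have "- s u * (h u + m s) \<ge> - \<gamma>" by auto
    moreover have "ising_prob p J h s \<ge> 0" unfolding ising_prob_def Z_def[symmetric]
      using Zpos by simp
    ultimately show ?thesis unfolding g_def by (intro mult_left_mono) auto
  qed
  have P1: "(\<Sum>s\<in>C. ising_prob p J h s) = 1"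
    unfolding ising_prob_def sum_divide_distrib[symmetric]
    using Zpos by (simp add: Z_def ising_Z_def C_def)
  have Gl: "G \<ge> exp (- \<gamma>)"
  proof -
    have "exp (- \<gamma>) = (\<Sum>s\<in>C. ising_prob p J h s * exp (- \<gamma>))"
      using P1 by (simp add: sum_distrib_right[symmetric])
    also have "\<dots> \<le> G" unfolding G_def by (rule sum_mono) (rule gl)
    finally show ?thesis .
  qed
  define x where "x = \<theta> - h u"
  have "exp (- \<gamma>) / (2 + 2 * \<gamma>) * x^2 \<le> exp (- \<gamma>) / 2 * x^2"
    using gpos by (intro mult_right_mono divide_left_mono) auto
  also have "\<dots> \<le> G * (x^2 / 2)" using Gl by (simp add: mult_right_mono)
  also have "\<dots> \<le> G * (cosh x - 1)"
    using Gl cosh_ge[of x] by (intro mult_left_mono) (auto intro: order_trans[OF _ Gl])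
  finally show ?thesis unfolding D using Rcosh x_def by (simp add: algebra_simps)
qed

end
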